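(* Let $V$ be a finite nonempty set and $f:\{0,1\}^V\to\{0,1\}^V$ an and-net, and let $C$ be a signed digraph. Then $f$ has a circular subnetwork whose interaction graph is $C$ if and only if $C$ is a cycle of $G(f)$ that has no chord and no delocalizing vertex in $G(f)$.
   Context: For nonempty $I\subseteq V$ and $z\in\{0,1\}^{V\setminus I}$, the subnetwork of $f$ induced by $z$ is $h:\{0,1\}^I\to\{0,1\}^I$ with $h(x|_I)=f(x)|_I$ for all $x$ whose restriction to $V\setminus I$ is $z$. For a network $g$ on $W$ and $x^{j\alpha}$ the point equal to $x$ except its $j$-component is $\alpha$, the (global) interaction graph $G(g)$ is the signed digraph on $W$ with a positive (resp. negative) arc from $j$ to $i$ iff $g_i(x^{j1})-g_i(x^{j0})=1$ (resp. $=-1$) for at least one $x$. $f$ is an and-net if $G(f)$ has at most one arc from $j$ to $i$ for all $i,j$ and for every $i$ and $x$: $f_i(x)=1$ iff $G(f)$ has no positive arc $j\to i$ with $x_j=0$ and no negative arc $j\to i$ with $x_j=1$. A cycle is a subgraph with at most one arc between any ordered pair whose underlying unsigned digraph is a directed cycle; positive (negative) if it has an even (odd) number of negative arcs. $g$ is circular if $G(g)$ itself is a cycle through all vertices of $W$. A cycle $C$ of $G$ has no chord if its underlying unsigned digraph is an induced subgraph of the underlying unsigned digraph of $G$. A vertex $v$ (possibly on $C$) is a delocalizing vertex of $C$ in $G$ if $G$ has a positive arc from $v$ to a vertex of $C$ and a negative arc from $v$ to a different vertex of $C$. *)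

theory Defs
  imports Main
begin

(* Boolean configurations on a carrier set W: x :: 'v => bool, with x v = False outside W
   (canonical representative of an element of {0,1}^W; True = 1, False = 0). *)
definition conf :: "'v set \<Rightarrow> ('v \<Rightarrow> bool) set" where
  "conf W = {x. \<forall>v. v \<notin> W \<longrightarrow> x v = False}"

(* A network on W is a map g :: ('v => bool) => ('v => bool); only its values on conf W
   and at components in W are relevant. *)

datatype sign = Pos | Neg

(* signed digraph: (vertex set, set of signed arcs (j, s, i) meaning an arc j -> i of sign s) *)
type_synonym 'v sdigraph = "'v set \<times> ('v \<times> sign \<times> 'v) set"

definition verts :: "'v sdigraph \<Rightarrow> 'v set" where "verts G = fst G"
definition arcs :: "'v sdigraph \<Rightarrow> ('v \<times> sign \<times> 'v) set" where "arcs G = snd G"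

definition ig :: "'v set \<Rightarrow> (('v \<Rightarrow> bool) \<Rightarrow> ('v \<Rightarrow> bool)) \<Rightarrow> 'v sdigraph" where
  "ig W g = (W, {(j, s, i). j \<in> W \<and> i \<in> W \<and>
      (\<exists>x \<in> conf W.
         (s = Pos \<and> g (x(j := False)) i = False \<and> g (x(j := True)) i = True) \<or>
         (s = Neg \<and> g (x(j := False)) i = True \<and> g (x(j := True)) i = False))})"

definition and_net :: "'v set \<Rightarrow> (('v \<Rightarrow> bool) \<Rightarrow> ('v \<Rightarrow> bool)) \<Rightarrow> bool" where
  "and_net V f \<longleftrightarrow>
     (\<forall>j i s s'. (j, s, i) \<in> arcs (ig V f) \<and> (j, s', i) \<in> arcs (ig V f) \<longrightarrow> s = s') \<and>
     (\<forall>i \<in> V. \<forall>x \<in> conf V.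
        f x i \<longleftrightarrow> \<not> (\<exists>j. (j, Pos, i) \<in> arcs (ig V f) \<and> x j = False) \<and>
                   \<not> (\<exists>j. (j, Neg, i) \<in> arcs (ig V f) \<and> x j = True))"

definition subnet :: "'v set \<Rightarrow> (('v \<Rightarrow> bool) \<Rightarrow> ('v \<Rightarrow> bool)) \<Rightarrow> 'v set \<Rightarrow> ('v \<Rightarrow> bool)
                      \<Rightarrow> (('v \<Rightarrow> bool) \<Rightarrow> ('v \<Rightarrow> bool))" where
  "subnet V f I z = (\<lambda>y v. if v \<in> I then f (\<lambda>u. if u \<in> I then y u else z u) v else False)"

definition uarcs :: "'v sdigraph \<Rightarrow> ('v \<times> 'v) set" where
  "uarcs G = {(j, i). \<exists>s. (j, s, i) \<in> arcs G}"

(* unsigned digraph (U, E) is a directed cycle (length >= 1, loops allowed as length 1) *)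
definition directed_cycle :: "'v set \<Rightarrow> ('v \<times> 'v) set \<Rightarrow> bool" where
  "directed_cycle U E \<longleftrightarrow> (\<exists>(n::nat) p. n \<ge> 1 \<and> bij_betw p {0..<n} U \<and>
       E = {(p k, p ((k + 1) mod n)) | k. k < n})"

definition simple_sd :: "'v sdigraph \<Rightarrow> bool" where
  "simple_sd G \<longleftrightarrow> (\<forall>j i s s'. (j, s, i) \<in> arcs G \<and> (j, s', i) \<in> arcs G \<longrightarrow> s = s')"

definition is_cycle_of :: "'v sdigraph \<Rightarrow> 'v sdigraph \<Rightarrow> bool" where
  "is_cycle_of C G \<longleftrightarrow> verts C \<subseteq> verts G \<and> arcs C \<subseteq> arcs G \<and> simple_sd C \<and>
      directed_cycle (verts C) (uarcs C)"

definition circular :: "'v set \<Rightarrow> (('v \<Rightarrow> bool) \<Rightarrow> ('v \<Rightarrow> bool)) \<Rightarrow> bool" where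
  "circular W g \<longleftrightarrow> simple_sd (ig W g) \<and> directed_cycle W (uarcs (ig W g))"

definition no_chord :: "'v sdigraph \<Rightarrow> 'v sdigraph \<Rightarrow> bool" where
  "no_chord C G \<longleftrightarrow> (\<forall>j \<in> verts C. \<forall>i \<in> verts C. (j, i) \<in> uarcs G \<longrightarrow> (j, i) \<in> uarcs C)"

definition delocalizing :: "'v \<Rightarrow> 'v sdigraph \<Rightarrow> 'v sdigraph \<Rightarrow> bool" where
  "delocalizing v C G \<longleftrightarrow> v \<in> verts G \<and>
     (\<exists>a b. a \<in> verts C \<and> b \<in> verts C \<and> a \<noteq> b \<and> (v, Pos, a) \<in> arcs G \<and> (v, Neg, b) \<in> arcs G)"

end

theory Submission
  imports Defs
begin

fun lit :: "sign \<Rightarrow> bool \<Rightarrow> bool" where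
  "lit Pos b = b" | "lit Neg b = (\<not> b)"

lemma andf:
  assumes "and_net V f" "i \<in> V" "x \<in> conf V"
  shows "f x i \<longleftrightarrow> (\<forall>j s. (j, s, i) \<in> arcs (ig V f) \<longrightarrow> lit s (x j))"
proof -
  have "f x i \<longleftrightarrow> \<not> (\<exists>j. (j, Pos, i) \<in> arcs (ig V f) \<and> x j = False) \<and>
                   \<not> (\<exists>j. (j, Neg, i) \<in> arcs (ig V f) \<and> x j = True)"
    using assms unfolding and_net_def by blast
  also have "\<dots> \<longleftrightarrow> (\<forall>j s. (j, s, i) \<in> arcs (ig V f) \<longrightarrow> lit s (x j))"
    apply (rule iffI)
     apply clarify
     apply (case_tac s; auto)
    apply (metis lit.simps)
    done
  finally show ?thesis .
qed

lemma simpl: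
  assumes "and_net V f" "(j, s, i) \<in> arcs (ig V f)" "(j, s', i) \<in> arcs (ig V f)"
  shows "s = s'"
  using assms unfolding and_net_def by blast

lemma arcs_in:
  assumes "(j, s, i) \<in> arcs (ig W g)" shows "j \<in> W" "i \<in> W"
  using assms unfolding ig_def arcs_def by auto

lemma verts_ig: "verts (ig W g) = W" unfolding verts_def ig_def by simp

lemma ig_PosI:
  assumes "j \<in> W" "i \<in> W" "x \<in> conf W" "g (x(j := False)) i = False" "g (x(j := True)) i = True"
  shows "(j, Pos, i) \<in> arcs (ig W g)"
  using assms unfolding ig_def arcs_def by (simp, blast)

lemma ig_NegI:
  assumes "j \<in> W" "i \<in> W" "x \<in> conf W" "g (x(j := False)) i = True" "g (x(j := True)) i = False"
  shows "(j, Neg, i) \<in> arcs (ig W g)"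
  using assms unfolding ig_def arcs_def by (simp, blast)

lemma conf_upd: "j \<in> I \<Longrightarrow> x \<in> conf I \<Longrightarrow> x(j := b) \<in> conf I"
  unfolding conf_def by auto

lemma merge_conf:
  assumes "I \<subseteq> V" "y \<in> conf I" "z \<in> conf (V - I)"
  shows "(\<lambda>u. if u \<in> I then y u else z u) \<in> conf V"
  using assms unfolding conf_def by auto

lemma key:
  assumes an: "and_net V f" and IV: "I \<subseteq> V" and z: "z \<in> conf (V - I)"
  shows "(j, s, i) \<in> arcs (ig I (subnet V f I z)) \<longleftrightarrow>
     j \<in> I \<and> i \<in> I \<and> (j, s, i) \<in> arcs (ig V f) \<and>
     (\<forall>k s'. (k, s', i) \<in> arcs (ig V f) \<and> k \<notin> I \<longrightarrow> lit s' (z k))"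
    (is "?L \<longleftrightarrow> ?R")
proof
  assume L: ?L
  then have jI: "j \<in> I" and iI: "i \<in> I" using arcs_in by metis+
  have ex: "\<exists>x\<in>conf I. (s = Pos \<and> subnet V f I z (x(j := False)) i = False \<and> subnet V f I z (x(j := True)) i = True) \<or>
        (s = Neg \<and> subnet V f I z (x(j := False)) i = True \<and> subnet V f I z (x(j := True)) i = False)"
    using L unfolding ig_def arcs_def by simp
  then obtain x where x: "x \<in> conf I" and
    c: "(s = Pos \<and> subnet V f I z (x(j := False)) i = False \<and> subnet V f I z (x(j := True)) i = True) \<or>
        (s = Neg \<and> subnet V f I z (x(j := False)) i = True \<and> subnet V f I z (x(j := True)) i = False)"
    by blast
  define x0 where "x0 = (\<lambda>u. if u \<in> I then (x(j := False)) u else z u)"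
  define x1 where "x1 = (\<lambda>u. if u \<in> I then (x(j := True)) u else z u)"
  have x0c: "x0 \<in> conf V" unfolding x0_def
    by (rule merge_conf[OF IV conf_upd[OF jI x] z])
  have x1c: "x1 \<in> conf V" unfolding x1_def
    by (rule merge_conf[OF IV conf_upd[OF jI x] z])
  have iV: "i \<in> V" using iI IV by auto
  have e0: "subnet V f I z (x(j := False)) i = f x0 i" unfolding subnet_def x0_def using iI by simp
  have e1: "subnet V f I z (x(j := True)) i = f x1 i" unfolding subnet_def x1_def using iI by simp
  have d: "\<And>k. k \<noteq> j \<Longrightarrow> x0 k = x1 k" unfolding x0_def x1_def by auto
  have x0j: "x0 j = False" "x1 j = True" unfolding x0_def x1_def using jI by auto
  have zz: "x0 k = z k" "x1 k = z k" if "k \<notin> I" for k unfolding x0_def x1_def using that by auto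
  show ?R
  proof (cases s)
    case Pos
    with c e0 e1 have "f x1 i" "\<not> f x0 i" by auto
    then have A1: "\<forall>k s. (k, s, i) \<in> arcs (ig V f) \<longrightarrow> lit s (x1 k)"
      and A0: "\<exists>k s. (k, s, i) \<in> arcs (ig V f) \<and> \<not> lit s (x0 k)"
      using andf[OF an iV x1c] andf[OF an iV x0c] by auto
    from A0 obtain k s' where k: "(k, s', i) \<in> arcs (ig V f)" "\<not> lit s' (x0 k)" by blast
    have kj: "k = j"
    proof (rule ccontr)
      assume "k \<noteq> j"
      then have xe: "x0 k = x1 k" using d by blast
      have "lit s' (x1 k)" using A1 k(1) by blast
      then show False using k(2) xe by simp
    qed
    then have "s' = Pos" using k x0j by (cases s') auto
    moreover have "\<forall>k s'. (k, s', i) \<in> arcs (ig V f) \<and> k \<notin> I \<longrightarrow> lit s' (z k)"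
    proof (intro allI impI)
      fix k s' assume h: "(k, s', i) \<in> arcs (ig V f) \<and> k \<notin> I"
      then have "lit s' (x1 k)" using A1 by blast
      then show "lit s' (z k)" using zz(2)[of k] h by simp
    qed
    ultimately show ?thesis using jI iI k kj Pos by blast
  next
    case Neg
    with c e0 e1 have "f x0 i" "\<not> f x1 i" by auto
    then have A1: "\<forall>k s. (k, s, i) \<in> arcs (ig V f) \<longrightarrow> lit s (x0 k)"
      and A0: "\<exists>k s. (k, s, i) \<in> arcs (ig V f) \<and> \<not> lit s (x1 k)"
      using andf[OF an iV x1c] andf[OF an iV x0c] by auto
    from A0 obtain k s' where k: "(k, s', i) \<in> arcs (ig V f)" "\<not> lit s' (x1 k)" by blast
    have kj: "k = j"
    proof (rule ccontr)
      assume "k \<noteq> j"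
      then have xe: "x0 k = x1 k" using d by blast
      have "lit s' (x0 k)" using A1 k(1) by blast
      then show False using k(2) xe by simp
    qed
    then have "s' = Neg" using k x0j by (cases s') auto
    moreover have "\<forall>k s'. (k, s', i) \<in> arcs (ig V f) \<and> k \<notin> I \<longrightarrow> lit s' (z k)"
    proof (intro allI impI)
      fix k s' assume h: "(k, s', i) \<in> arcs (ig V f) \<and> k \<notin> I"
      then have "lit s' (x0 k)" using A1 by blast
      then show "lit s' (z k)" using zz(1)[of k] h by simp
    qed
    ultimately show ?thesis using jI iI k kj Neg by blast
  qed
next
  assume R: ?R
  then have jI: "j \<in> I" and iI: "i \<in> I" and ji: "(j, s, i) \<in> arcs (ig V f)"
    and cst: "\<forall>k s'. (k, s', i) \<in> arcs (ig V f) \<and> k \<notin> I \<longrightarrow> lit s' (z k)" by auto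
  define y where "y = (\<lambda>k. k \<in> I \<and> (k, Pos, i) \<in> arcs (ig V f))"
  have yc: "y \<in> conf I" unfolding y_def conf_def by auto
  define x0 where "x0 = (\<lambda>u. if u \<in> I then (y(j := False)) u else z u)"
  define x1 where "x1 = (\<lambda>u. if u \<in> I then (y(j := True)) u else z u)"
  have x0c: "x0 \<in> conf V" unfolding x0_def
    by (rule merge_conf[OF IV conf_upd[OF jI yc] z])
  have x1c: "x1 \<in> conf V" unfolding x1_def
    by (rule merge_conf[OF IV conf_upd[OF jI yc] z])
  have iV: "i \<in> V" using iI IV by auto
  have e0: "subnet V f I z (y(j := False)) i = f x0 i" unfolding subnet_def x0_def using iI by simp
  have e1: "subnet V f I z (y(j := True)) i = f x1 i" unfolding subnet_def x1_def using iI by simp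
  have other: "lit s' (x0 k) \<and> lit s' (x1 k)" if "(k, s', i) \<in> arcs (ig V f)" "k \<noteq> j" for k s'
  proof (cases "k \<in> I")
    case True
    have xx: "x0 k = ((k, Pos, i) \<in> arcs (ig V f))" "x1 k = ((k, Pos, i) \<in> arcs (ig V f))"
      unfolding x0_def x1_def y_def using True that(2) by auto
    show ?thesis
    proof (cases s')
      case Pos then show ?thesis using xx that(1) by simp
    next
      case Neg
      have "(k, Pos, i) \<notin> arcs (ig V f)" using simpl[OF an that(1), of Pos] Neg by auto
      then show ?thesis using xx Neg by simp
    qed
  next
    case False
    have xx: "x0 k = z k" "x1 k = z k" unfolding x0_def x1_def using False by auto
    then show ?thesis using that(1) cst False by simp
  qed
  have jv: "x0 j = False" "x1 j = True" unfolding x0_def x1_def using jI by auto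
  have jarc: "s' = s" if "(j, s', i) \<in> arcs (ig V f)" for s' using simpl[OF an that ji] .
  show ?L
  proof (cases s)
    case Pos
    have "f x1 i"
    proof (rule andf[OF an iV x1c, THEN iffD2], intro allI impI)
      fix k s' assume ka: "(k, s', i) \<in> arcs (ig V f)"
      show "lit s' (x1 k)"
      proof (cases "k = j")
        case True then show ?thesis using jarc[OF ka[unfolded True]] Pos jv True by simp
      next
        case False then show ?thesis using other ka by blast
      qed
    qed
    moreover have "\<not> f x0 i"
    proof
      assume "f x0 i"
      then have "lit s (x0 j)" using andf[OF an iV x0c] ji by blast
      then show False using Pos jv by simp
    qed
    ultimately show ?thesis using e0 e1 Pos by (auto intro!: ig_PosI[OF jI iI yc])
  next
    case Neg
    have "f x0 i"
    proof (rule andf[OF an iV x0c, THEN iffD2], intro allI impI)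
      fix k s' assume ka: "(k, s', i) \<in> arcs (ig V f)"
      show "lit s' (x0 k)"
      proof (cases "k = j")
        case True then show ?thesis using jarc[OF ka[unfolded True]] Neg jv True by simp
      next
        case False then show ?thesis using other ka by blast
      qed
    qed
    moreover have "\<not> f x1 i"
    proof
      assume "f x1 i"
      then have "lit s (x1 j)" using andf[OF an iV x1c] ji by blast
      then show False using Neg jv by simp
    qed
    ultimately show ?thesis using e0 e1 Neg by (auto intro!: ig_NegI[OF jI iI yc])
  qed
qed


lemma dc_in:
  assumes "directed_cycle U E" "i \<in> U" shows "\<exists>j. (j, i) \<in> E"
proof -
  obtain n p where n: "(n::nat) \<ge> 1" and b: "bij_betw p {0..<n} U"
    and E: "E = {(p k, p ((k + 1) mod n)) | k. k < n}"
    using assms(1) unfolding directed_cycle_def by blast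
  obtain k where k: "k < n" "i = p k" using b assms(2) unfolding bij_betw_def by auto
  show ?thesis
  proof (cases k)
    case 0
    have "(p (n - 1), p ((n - 1 + 1) mod n)) \<in> E" using E n by auto
    then show ?thesis using 0 k n by auto
  next
    case (Suc m)
    have "(p m, p ((m + 1) mod n)) \<in> E" using E k Suc by auto
    then show ?thesis using Suc k by auto
  qed
qed

lemma dc_sub:
  assumes "directed_cycle U E" "(a, b) \<in> E" shows "a \<in> U" "b \<in> U"
proof -
  obtain n p where n: "(n::nat) \<ge> 1" and b: "bij_betw p {0..<n} U"
    and E: "E = {(p k, p ((k + 1) mod n)) | k. k < n}"
    using assms(1) unfolding directed_cycle_def by blast
  obtain k where k: "k < n" "a = p k" "b = p ((k + 1) mod n)" using assms(2) E by auto
  have "0 < n" using n by simp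
  then have "(k + 1) mod n < n" by simp
  then show "a \<in> U" "b \<in> U" using k b unfolding bij_betw_def by auto
qed

lemma dc_out:
  assumes "directed_cycle U E" "(v, a) \<in> E" "(v, b) \<in> E" shows "a = b"
proof -
  obtain n p where n: "(n::nat) \<ge> 1" and b: "bij_betw p {0..<n} U"
    and E: "E = {(p k, p ((k + 1) mod n)) | k. k < n}"
    using assms(1) unfolding directed_cycle_def by blast
  obtain k where k: "k < n" "v = p k" "a = p ((k + 1) mod n)" using assms(2) E by auto
  obtain k' where k': "k' < n" "v = p k'" "b = p ((k' + 1) mod n)" using assms(3) E by auto
  have "k = k'" using k k' b unfolding bij_betw_def by (metis atLeastLessThan_iff le0 inj_onD)
  then show ?thesis using k k' by simp
qed

lemma dc_ne:
  assumes "directed_cycle U E" shows "U \<noteq> {}"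
proof -
  obtain n p where n: "(n::nat) \<ge> 1" and b: "bij_betw p {0..<n} U"
    using assms(1) unfolding directed_cycle_def by blast
  then have "p 0 \<in> U" unfolding bij_betw_def using n by force
  then show ?thesis by auto
qed

theorem proposition9:
  fixes V :: "'v set" and f :: "('v \<Rightarrow> bool) \<Rightarrow> ('v \<Rightarrow> bool)" and C :: "'v sdigraph"
  assumes "finite V" and "V \<noteq> {}" and "and_net V f"
  shows "(\<exists>I z. I \<noteq> {} \<and> I \<subseteq> V \<and> z \<in> conf (V - I) \<and>
             circular I (subnet V f I z) \<and> ig I (subnet V f I z) = C)
         \<longleftrightarrow> (is_cycle_of C (ig V f) \<and> no_chord C (ig V f) \<and>
              \<not> (\<exists>v. delocalizing v C (ig V f)))"
proof
  assume "\<exists>I z. I \<noteq> {} \<and> I \<subseteq> V \<and> z \<in> conf (V - I) \<and>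
             circular I (subnet V f I z) \<and> ig I (subnet V f I z) = C"
  then obtain I z where IV: "I \<subseteq> V" and z: "z \<in> conf (V - I)" and
    circ: "circular I (subnet V f I z)" and C: "ig I (subnet V f I z) = C" by blast
  note K = key[OF assms(3) IV z]
  have vC: "verts C = I" using C verts_ig by metis
  have dc: "directed_cycle I (uarcs C)" using circ C unfolding circular_def by simp
  have aC: "(j, s, i) \<in> arcs C \<longleftrightarrow> j \<in> I \<and> i \<in> I \<and> (j, s, i) \<in> arcs (ig V f) \<and>
     (\<forall>k s'. (k, s', i) \<in> arcs (ig V f) \<and> k \<notin> I \<longrightarrow> lit s' (z k))" for j s i
    using K C by simp
  have cst: "\<forall>k s'. (k, s', i) \<in> arcs (ig V f) \<and> k \<notin> I \<longrightarrow> lit s' (z k)" if iI: "i \<in> I" for i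
  proof -
    obtain j where "(j, i) \<in> uarcs C" using dc_in[OF dc iI] by blast
    then obtain s where "(j, s, i) \<in> arcs C" unfolding uarcs_def by auto
    then show ?thesis using aC by blast
  qed
  have cyc: "is_cycle_of C (ig V f)"
    unfolding is_cycle_of_def
  proof (intro conjI)
    show "verts C \<subseteq> verts (ig V f)" using vC IV by (simp add: verts_ig)
    show "arcs C \<subseteq> arcs (ig V f)" using aC by auto
    show "simple_sd C" unfolding simple_sd_def using aC simpl[OF assms(3)] by blast
    show "directed_cycle (verts C) (uarcs C)" using dc vC by simp
  qed
  have nc: "no_chord C (ig V f)" unfolding no_chord_def
  proof (intro ballI impI)
    fix j i assume j: "j \<in> verts C" and i: "i \<in> verts C" and "(j, i) \<in> uarcs (ig V f)"
    then obtain s where "(j, s, i) \<in> arcs (ig V f)" unfolding uarcs_def by auto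
    then have "(j, s, i) \<in> arcs C" using aC cst j i vC by auto
    then show "(j, i) \<in> uarcs C" unfolding uarcs_def by auto
  qed
  have nd: "\<not> (\<exists>v. delocalizing v C (ig V f))"
  proof
    assume "\<exists>v. delocalizing v C (ig V f)"
    then obtain v a b where a: "a \<in> I" and b: "b \<in> I" and ab: "a \<noteq> b" and
      va: "(v, Pos, a) \<in> arcs (ig V f)" and vb: "(v, Neg, b) \<in> arcs (ig V f)"
      unfolding delocalizing_def vC by blast
    show False
    proof (cases "v \<in> I")
      case True
      then have "(v, Pos, a) \<in> arcs C" "(v, Neg, b) \<in> arcs C" using aC cst a b va vb by auto
      then have "(v, a) \<in> uarcs C" "(v, b) \<in> uarcs C" unfolding uarcs_def by auto
      then show False using dc_out[OF dc] ab by blast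
    next
      case False
      then have "lit Pos (z v)" "lit Neg (z v)" using cst a b va vb by blast+
      then show False by simp
    qed
  qed
  show "is_cycle_of C (ig V f) \<and> no_chord C (ig V f) \<and> \<not> (\<exists>v. delocalizing v C (ig V f))"
    using cyc nc nd by blast
next
  assume "is_cycle_of C (ig V f) \<and> no_chord C (ig V f) \<and> \<not> (\<exists>v. delocalizing v C (ig V f))"
  then have cyc: "is_cycle_of C (ig V f)" and nc: "no_chord C (ig V f)"
    and nd: "\<not> (\<exists>v. delocalizing v C (ig V f))" by auto
  define I where "I = verts C"
  have IV: "I \<subseteq> V" using cyc unfolding I_def is_cycle_of_def by (simp add: verts_ig)
  have sub: "arcs C \<subseteq> arcs (ig V f)" using cyc unfolding is_cycle_of_def by auto
  have dc: "directed_cycle I (uarcs C)" using cyc unfolding is_cycle_of_def I_def by auto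
  have Ine: "I \<noteq> {}" using dc_ne[OF dc] .
  define z where "z = (\<lambda>v. v \<in> V - I \<and> (\<exists>a\<in>I. (v, Pos, a) \<in> arcs (ig V f)))"
  have z: "z \<in> conf (V - I)" unfolding z_def conf_def by auto
  have cst: "lit s' (z k)" if i: "i \<in> I" and ka: "(k, s', i) \<in> arcs (ig V f)" and kI: "k \<notin> I" for i k s'
  proof (cases s')
    case Pos
    then show ?thesis using i ka kI arcs_in[OF ka] unfolding z_def by auto
  next
    case Neg
    have "\<not> (k, Pos, a) \<in> arcs (ig V f)" if "a \<in> I" for a
    proof
      assume kp: "(k, Pos, a) \<in> arcs (ig V f)"
      show False
      proof (cases "a = i")
        case True then show False using simpl[OF assms(3) kp] ka Neg by auto
      next
        case False
        have "delocalizing k C (ig V f)" unfolding delocalizing_def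
          using False kp ka Neg that i arcs_in[OF ka] unfolding I_def verts_ig by blast
        then show False using nd by blast
      qed
    qed
    then show ?thesis using Neg unfolding z_def by auto
  qed
  note K = key[OF assms(3) IV z]
  have arcsEq: "arcs (ig I (subnet V f I z)) = arcs C"
  proof (intro set_eqI iffI)
    fix e assume "e \<in> arcs (ig I (subnet V f I z))"
    then obtain j s i where e: "e = (j, s, i)" and j: "j \<in> I" and i: "i \<in> I"
      and a: "(j, s, i) \<in> arcs (ig V f)" using K by (cases e) auto
    have "(j, i) \<in> uarcs (ig V f)" using a unfolding uarcs_def by auto
    then have "(j, i) \<in> uarcs C" using nc j i unfolding no_chord_def I_def by auto
    then obtain s' where s': "(j, s', i) \<in> arcs C" unfolding uarcs_def by auto
    then have "s' = s" using simpl[OF assms(3) _ a] sub by auto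
    then show "e \<in> arcs C" using s' e by simp
  next
    fix e assume eC: "e \<in> arcs C"
    obtain j s i where e: "e = (j, s, i)" by (cases e) auto
    have "(j, i) \<in> uarcs C" using eC e unfolding uarcs_def by auto
    then have "j \<in> I" "i \<in> I" using dc_sub[OF dc] by auto
    moreover have "(j, s, i) \<in> arcs (ig V f)" using eC e sub by auto
    ultimately show "e \<in> arcs (ig I (subnet V f I z))" using K cst e by auto
  qed
  have igC: "ig I (subnet V f I z) = C"
    by (metis prod.collapse verts_ig arcsEq I_def verts_def arcs_def)
  have "circular I (subnet V f I z)"
    unfolding circular_def igC using cyc dc unfolding is_cycle_of_def by auto
  then show "\<exists>I z. I \<noteq> {} \<and> I \<subseteq> V \<and> z \<in> conf (V - I) \<and>
             circular I (subnet V f I z) \<and> ig I (subnet V f I z) = C"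
    using Ine IV z igC by blast
qed

end
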